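(* Let $\mathcal{X}$ be a measurable space, $\mathcal{G}$ a class of measurable classifiers $g:\mathcal{X}\to\{-1,+1\}$, and $p\in(0,1)$ a known number. Let $(X'_1,Y'_1),\ldots,(X'_n,Y'_n)$ be i.i.d. copies of a pair $(X',Y')$ valued in $\mathcal{X}\times\{-1,+1\}$ with $p'=\mathbb{P}\{Y'=+1\}$. Let $\varepsilon\in(0,1/2)$ and suppose $p'\in(\varepsilon,1-\varepsilon)$. Define, for $g\in\mathcal{G}$, $$\widetilde{\mathcal{R}}_{w^*,n}(g)=\frac{p}{p'}\frac{1}{n}\sum_{i:Y'_i=+1}\mathbb{I}\{g(X'_i)=-1\}+\frac{1-p}{1-p'}\frac{1}{n}\sum_{i:Y'_i=-1}\mathbb{I}\{g(X'_i)=+1\},$$ $$\widetilde{\mathcal{R}}_{\widehat{w}^*,n}(g)=\frac{p}{n'_+}\sum_{i:Y'_i=+1}\mathbb{I}\{g(X'_i)=-1\}+\frac{1-p}{n'_-}\sum_{i:Y'_i=-1}\mathbb{I}\{g(X'_i)=+1\},$$ where $n'_+=\sum_{i=1}^n\mathbb{I}\{Y'_i=+1\}$ and $n'_-=n-n'_+$. Then for any $\delta\in(0,1)$, as soon as $n\ge 2\log(2/\delta)/\varepsilon^2$, with probability larger than $1-\delta$, $$\sup_{g\in\mathcal{G}}\left|\widetilde{\mathcal{R}}_{\widehat{w}^*,n}(g)-\widetilde{\mathcal{R}}_{w^*,n}(g)\right|\le\frac{2}{\varepsilon^2}\sqrt{\frac{\log(2/\delta)}{2n}}.$$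
   Context: $\mathbb{I}\{\cdot\}$ denotes the indicator function. *)

theory Defs
  imports "HOL-Probability.Probability"
begin

definition npos :: "nat \<Rightarrow> (nat \<Rightarrow> 'w \<Rightarrow> int) \<Rightarrow> 'w \<Rightarrow> nat" where
  "npos n Y \<omega> = card {i \<in> {..<n}. Y i \<omega> = 1}"

definition risk_w :: "nat \<Rightarrow> real \<Rightarrow> real \<Rightarrow> (nat \<Rightarrow> 'w \<Rightarrow> 'a) \<Rightarrow> (nat \<Rightarrow> 'w \<Rightarrow> int)
    \<Rightarrow> ('a \<Rightarrow> int) \<Rightarrow> 'w \<Rightarrow> real" where
  "risk_w n p p' X Y g \<omega> =
     p / p' * (1 / real n) * (\<Sum>i \<in> {i \<in> {..<n}. Y i \<omega> = 1}. (if g (X i \<omega>) = -1 then 1 else 0))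
   + (1 - p) / (1 - p') * (1 / real n) * (\<Sum>i \<in> {i \<in> {..<n}. Y i \<omega> = -1}. (if g (X i \<omega>) = 1 then 1 else 0))"

definition risk_what :: "nat \<Rightarrow> real \<Rightarrow> (nat \<Rightarrow> 'w \<Rightarrow> 'a) \<Rightarrow> (nat \<Rightarrow> 'w \<Rightarrow> int)
    \<Rightarrow> ('a \<Rightarrow> int) \<Rightarrow> 'w \<Rightarrow> real" where
  "risk_what n p X Y g \<omega> =
     p / real (npos n Y \<omega>) * (\<Sum>i \<in> {i \<in> {..<n}. Y i \<omega> = 1}. (if g (X i \<omega>) = -1 then 1 else 0))
   + (1 - p) / real (n - npos n Y \<omega>) * (\<Sum>i \<in> {i \<in> {..<n}. Y i \<omega> = -1}. (if g (X i \<omega>) = 1 then 1 else 0))"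

end

theory Submission imports Defs begin

lemma aux1:
  fixes S k n r :: real
  assumes "0 \<le> S" "S \<le> k" "0 < n" "0 < r"
  shows "\<bar>S / k - S / (n * r)\<bar> \<le> \<bar>k / n - r\<bar> / r"
proof (cases "k = 0")
  case True then show ?thesis using assms by simp
next
  case False
  then have k: "k > 0" using assms by simp
  have "S / k - S / (n * r) = (S / k) * (r - k / n) / r"
    using k assms by (simp add: field_simps)
  also have "\<bar>\<dots>\<bar> = (S / k) * \<bar>k / n - r\<bar> / r"
    using k assms by (simp add: abs_mult abs_minus_commute)
  also have "\<dots> \<le> 1 * \<bar>k / n - r\<bar> / r"
    using k assms by (intro divide_right_mono mult_right_mono) auto
  finally show ?thesis by simp
qed

lemma det_bound:
  fixes p p' e t :: real
  assumes p: "0 < p" "p < 1" and n: "n > 0"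
    and e: "0 < e" "e < 1/2" "e < p'" "p' < 1 - e"
    and d: "\<bar>real (npos n Y \<omega>) / real n - p'\<bar> \<le> t"
  shows "\<bar>risk_what n p X Y g \<omega> - risk_w n p p' X Y g \<omega>\<bar> \<le> 2 / e^2 * t"
proof -
  define A1 where "A1 = {i \<in> {..<n}. Y i \<omega> = 1}"
  define A2 where "A2 = {i \<in> {..<n}. Y i \<omega> = -1}"
  define S1 :: real where "S1 = (\<Sum>i \<in> A1. (if g (X i \<omega>) = -1 then 1 else 0))"
  define S2 :: real where "S2 = (\<Sum>i \<in> A2. (if g (X i \<omega>) = 1 then 1 else 0))"
  define k where "k = npos n Y \<omega>"
  have kA1: "k = card A1" unfolding k_def npos_def A1_def by simp
  have S1: "0 \<le> S1" "S1 \<le> real k"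
    unfolding S1_def kA1 by (auto intro: sum_nonneg order_trans[OF sum_mono[where g="\<lambda>_. 1"]])
  have S2': "S2 \<le> real (card A2)"
    unfolding S2_def by (auto intro: order_trans[OF sum_mono[where g="\<lambda>_. 1"]])
  have "card A1 + card A2 = card (A1 \<union> A2)"
    by (rule card_Un_disjoint[symmetric]) (auto simp: A1_def A2_def)
  also have "\<dots> \<le> n" by (rule order_trans[OF card_mono[of "{..<n}"]]) (auto simp: A1_def A2_def)
  finally have c: "card A1 + card A2 \<le> n" .
  have S2: "0 \<le> S2" "S2 \<le> real (n - k)"
    unfolding S2_def using S2' c kA1 by (auto intro: sum_nonneg simp: S2_def)
  have kn: "k \<le> n" using c kA1 by simp
  have rw: "risk_what n p X Y g \<omega> = p * (S1 / real k) + (1 - p) * (S2 / real (n - k))"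
    unfolding risk_what_def S1_def S2_def A1_def A2_def k_def by simp
  have rw2: "risk_w n p p' X Y g \<omega> = p * (S1 / (real n * p')) + (1 - p) * (S2 / (real n * (1 - p')))"
    unfolding risk_w_def S1_def S2_def A1_def A2_def by (simp add: mult.commute)
  have b1: "\<bar>S1 / real k - S1 / (real n * p')\<bar> \<le> \<bar>real k / real n - p'\<bar> / p'"
    by (rule aux1) (use S1 n e in auto)
  have b2: "\<bar>S2 / real (n - k) - S2 / (real n * (1 - p'))\<bar> \<le> \<bar>real (n - k) / real n - (1 - p')\<bar> / (1 - p')"
    by (rule aux1) (use S2 n e in auto)
  have eq2: "\<bar>real (n - k) / real n - (1 - p')\<bar> = \<bar>real k / real n - p'\<bar>"
    using kn n by (simp add: of_nat_diff field_simps abs_minus_commute)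
  define D where "D = \<bar>real k / real n - p'\<bar>"
  have D: "D \<le> t" "0 \<le> D" using d by (auto simp: D_def k_def)
  have "\<bar>risk_what n p X Y g \<omega> - risk_w n p p' X Y g \<omega>\<bar>
     = \<bar>p * (S1 / real k - S1 / (real n * p')) + (1 - p) * (S2 / real (n - k) - S2 / (real n * (1 - p')))\<bar>"
    unfolding rw rw2 by (simp add: algebra_simps)
  also have "\<dots> \<le> p * \<bar>S1 / real k - S1 / (real n * p')\<bar> + (1 - p) * \<bar>S2 / real (n - k) - S2 / (real n * (1 - p'))\<bar>"
    using p by (metis (no_types, lifting) abs_mult abs_of_pos abs_triangle_ineq diff_gt_0_iff_gt)
  also have "\<dots> \<le> p * (D / p') + (1 - p) * (D / (1 - p'))"
    using b1 b2 eq2 p by (intro add_mono mult_left_mono) (auto simp: D_def)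
  also have "\<dots> \<le> p * (D / e) + (1 - p) * (D / e)"
    using p e D by (intro add_mono mult_left_mono divide_left_mono) auto
  also have "\<dots> = D / e" using e by (simp add: field_simps)
  also have "\<dots> \<le> t / e" using D e by (simp add: divide_right_mono)
  also have "\<dots> \<le> 2 / e^2 * t"
  proof -
    have "1 / e \<le> 2 / e^2" using e by (simp add: field_simps power2_eq_square)
    then show ?thesis using D by (metis mult_right_mono order_trans times_divide_eq_left mult_1 mult.commute)
  qed
  finally show ?thesis .
qed
theorem lemma2:
  fixes M :: "'w measure" and N :: "'a measure"
    and G :: "('a \<Rightarrow> int) set"
    and X :: "nat \<Rightarrow> 'w \<Rightarrow> 'a" and Y :: "nat \<Rightarrow> 'w \<Rightarrow> int"
    and X' :: "'w \<Rightarrow> 'a" and Y' :: "'w \<Rightarrow> int"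
    and p \<epsilon> \<delta> :: real and n :: nat
  assumes "prob_space M"
    and G_meas: "\<And>g. g \<in> G \<Longrightarrow> g \<in> measurable N (count_space UNIV)"
    and G_vals: "\<And>g x. g \<in> G \<Longrightarrow> x \<in> space N \<Longrightarrow> g x \<in> {-1, 1}"
    and p: "0 < p" "p < 1"
    and X'_meas: "X' \<in> measurable M N"
    and Y'_meas: "Y' \<in> measurable M (count_space UNIV)"
    and Y'_vals: "\<And>\<omega>. \<omega> \<in> space M \<Longrightarrow> Y' \<omega> \<in> {-1, 1}"
    and indep: "prob_space.indep_vars M (\<lambda>_. N \<Otimes>\<^sub>M count_space UNIV)
                  (\<lambda>i \<omega>. (X i \<omega>, Y i \<omega>)) {..<n}"
    and ident: "\<And>i. i < n \<Longrightarrow>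
                  distr M (N \<Otimes>\<^sub>M count_space UNIV) (\<lambda>\<omega>. (X i \<omega>, Y i \<omega>))
                = distr M (N \<Otimes>\<^sub>M count_space UNIV) (\<lambda>\<omega>. (X' \<omega>, Y' \<omega>))"
    and eps: "0 < \<epsilon>" "\<epsilon> < 1/2"
    and p'_range: "\<epsilon> < measure M {\<omega> \<in> space M. Y' \<omega> = 1}"
                  "measure M {\<omega> \<in> space M. Y' \<omega> = 1} < 1 - \<epsilon>"
    and delta: "0 < \<delta>" "\<delta> < 1"
    and n_large: "real n \<ge> 2 * ln (2 / \<delta>) / \<epsilon>^2"
  shows "\<exists>A \<in> sets M. measure M A \<ge> 1 - \<delta> \<and>
           (\<forall>\<omega> \<in> A.
              (SUP g \<in> G. ereal \<bar>risk_what n p X Y g \<omega>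
                               - risk_w n p (measure M {\<omega> \<in> space M. Y' \<omega> = 1}) X Y g \<omega>\<bar>)
              \<le> ereal (2 / \<epsilon>^2 * sqrt (ln (2 / \<delta>) / (2 * real n))))"
proof -
  interpret prob_space M by fact
  define p' where "p' = measure M {\<omega> \<in> space M. Y' \<omega> = 1}"
  define t where "t = sqrt (ln (2 / \<delta>) / (2 * real n))"
  define h :: "'a \<times> int \<Rightarrow> real" where "h = (\<lambda>z. if snd z = 1 then 1 else 0)"
  define Z where "Z = (\<lambda>i \<omega>. h (X i \<omega>, Y i \<omega>))"
  define Z' where "Z' = (\<lambda>\<omega>. h (X' \<omega>, Y' \<omega>))"
  have lnpos: "ln (2 / \<delta>) > 0" using delta by simp
  have npos0: "n > 0"
  proof -
    have "2 * ln (2 / \<delta>) / \<epsilon>^2 > 0" using lnpos eps by simp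
    then show ?thesis using n_large by linarith
  qed
  have h_meas: "h \<in> measurable (N \<Otimes>\<^sub>M count_space UNIV) borel"
    unfolding h_def by measurable
  have XY_meas: "(\<lambda>\<omega>. (X i \<omega>, Y i \<omega>)) \<in> measurable M (N \<Otimes>\<^sub>M count_space UNIV)" if "i < n" for i
    using indep that unfolding indep_vars_def by auto
  have XY'_meas: "(\<lambda>\<omega>. (X' \<omega>, Y' \<omega>)) \<in> measurable M (N \<Otimes>\<^sub>M count_space UNIV)"
    using X'_meas Y'_meas by (rule measurable_Pair)
  have Z'_meas: "Z' \<in> borel_measurable M"
    unfolding Z'_def using measurable_comp[OF XY'_meas h_meas] by (simp add: comp_def)
  have indZ: "indep_vars (\<lambda>_. borel) Z {..<n}"
    unfolding Z_def using indep_vars_compose2[OF indep, of "\<lambda>_. h"] h_meas by simp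
  have distrZ: "distr M borel (Z i) = distr M borel Z'" if "i \<in> {..<n}" for i
  proof -
    have "distr M borel (Z i) = distr (distr M (N \<Otimes>\<^sub>M count_space UNIV) (\<lambda>\<omega>. (X i \<omega>, Y i \<omega>))) borel h"
      using distr_distr[OF h_meas XY_meas] that by (simp add: Z_def comp_def)
    also have "\<dots> = distr (distr M (N \<Otimes>\<^sub>M count_space UNIV) (\<lambda>\<omega>. (X' \<omega>, Y' \<omega>))) borel h"
      using ident that by simp
    also have "\<dots> = distr M borel Z'"
      using distr_distr[OF h_meas XY'_meas] by (simp add: Z'_def comp_def)
    finally show ?thesis .
  qed
  interpret H: Hoeffding_ineq_iid M "{..<n}" Z Z' 0 1 "expectation Z'"
  proof unfold_locales
    show "finite {..<n}" by simp
    show "indep_vars (\<lambda>_. borel) Z {..<n}" by (rule indZ)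
    show "distr M borel (Z i) = distr M borel Z'" if "i \<in> {..<n}" for i using that by (rule distrZ)
    show "random_variable borel Z'" by (rule Z'_meas)
    show "AE x in M. Z' x \<in> {0..1}" by (simp add: Z'_def h_def)
  qed
  have EZ': "expectation Z' = p'"
  proof -
    have ev: "{\<omega> \<in> space M. Y' \<omega> = 1} \<in> sets M" using Y'_meas by measurable
    have "expectation Z' = expectation (indicator {\<omega> \<in> space M. Y' \<omega> = 1})"
      by (intro Bochner_Integration.integral_cong) (auto simp: Z'_def h_def indicator_def)
    also have "\<dots> = p'" using ev by (simp add: p'_def)
    finally show ?thesis .
  qed
  define B where "B = {x \<in> space M. \<bar>(\<Sum>i\<in>{..<n}. Z i x) / real (card {..<n}) - expectation Z'\<bar> \<ge> t}"
  have t0: "t \<ge> 0" unfolding t_def using lnpos by simp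
  have PB: "prob B \<le> 2 * exp (-2 * real (card {..<n}) * t\<^sup>2 / (1 - 0)\<^sup>2)"
    unfolding B_def by (rule H.Hoeffding_ineq_abs_ge'[OF t0]) (use npos0 in auto)
  have "-2 * real (card {..<n}) * t\<^sup>2 / (1 - 0)\<^sup>2 = - ln (2 / \<delta>)"
    using npos0 lnpos by (simp add: t_def)
  then have PB': "prob B \<le> \<delta>" using PB delta by (simp add: exp_minus)
  have Bev: "B \<in> sets M"
  proof -
    have "Z i \<in> borel_measurable M" if "i \<in> {..<n}" for i using H.random_variable[OF that] .
    then show ?thesis unfolding B_def by measurable
  qed
  define A where "A = space M - B"
  have Aev: "A \<in> sets M" unfolding A_def using Bev by auto
  have PA: "measure M A \<ge> 1 - \<delta>" unfolding A_def using prob_compl[OF Bev] PB' by simp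
  show ?thesis
  proof (intro bexI conjI ballI)
    fix \<omega> assume w: "\<omega> \<in> A"
    have sZ: "(\<Sum>i\<in>{..<n}. Z i \<omega>) = real (npos n Y \<omega>)"
      unfolding Z_def h_def npos_def by (simp add: sum.If_cases Int_def)
    have d: "\<bar>real (npos n Y \<omega>) / real n - p'\<bar> \<le> t"
      using w sZ EZ' unfolding A_def B_def by auto
    show "(SUP g \<in> G. ereal \<bar>risk_what n p X Y g \<omega>
                               - risk_w n p (measure M {\<omega> \<in> space M. Y' \<omega> = 1}) X Y g \<omega>\<bar>)
              \<le> ereal (2 / \<epsilon>^2 * sqrt (ln (2 / \<delta>) / (2 * real n)))"
      unfolding p'_def[symmetric] t_def[symmetric]
      using det_bound[OF p npos0 eps p'_range[folded p'_def] d]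
      by (intro SUP_least) simp
  qed (use Aev PA in auto)
qed
end
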